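(* Let $1<k<n-1$ and let $H=(H_{\bm{a},\bm{b}})_{\bm{a},\bm{b}\in\mathcal{A}_k}$ be a $\binom{n}{k}\times\binom{n}{k}$ Hermitian matrix. Then for $i,j\in\{1,\dots,n\}$, $$\pi(H)_{ij}=\frac{1}{k}\sum_{\substack{\bm{l}\in\mathcal{A}_{k-1}\\ \{l_1,\dots,l_{k-1}\}\not\ni i,j}}\mathrm{sgn}(i,\bm{l})\,\mathrm{sgn}(j,\bm{l})\,H_{\mathrm{sr}(i,\bm{l}),\mathrm{sr}(j,\bm{l})},$$ where $(i,\bm{l})$ denotes $(i,l_1,\dots,l_{k-1})$ and the sum is over $\bm{l}$ containing neither $i$ nor $j$.
   Context: $\mathcal{A}_r=\{(a_1,\dots,a_r)\in\{1,\dots,n\}^{\times r}: a_1<\dots<a_r\}$; $\binom{n}{k}\times\binom{n}{k}$ matrices are indexed by $\mathcal{A}_k$ (basis $e_{a_1}\wedge\cdots\wedge e_{a_k}$ of $\wedge^k\mathbb{C}^n$). For $\bm{i}\in\{1,\dots,n\}^{\times k}$: $\mathrm{sgn}(\bm{i})=0$ if the entries of $\bm{i}$ are not all distinct, and otherwise $\mathrm{sgn}(\bm{i})=\mathrm{sgn}(\sigma)$ for the unique $\sigma\in\mathfrak{S}_k$ sorting $\bm{i}$ into increasing order; $\mathrm{sr}(\bm{i})$ is $\bm{i}$ sorted in nondecreasing order. $A$ is the $n^k\times\binom{n}{k}$ matrix with $A_{\bm{i},\bm{a}}=\frac{\mathrm{sgn}(\bm{i})}{\sqrt{k!}}\delta(\mathrm{sr}(\bm{i}),\bm{a})$.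 For an $n^k\times n^k$ matrix $M$, $\pi_1(M)_{i,j}=\sum_{l_1,\dots,l_{k-1}=1}^nM_{(i,l_1,\dots,l_{k-1}),(j,l_1,\dots,l_{k-1})}$, and $\pi(H)=\pi_1(AHA^T)$. *)

theory Defs
  imports "HOL-Analysis.Analysis" "HOL-Combinatorics.Permutations"
begin

definition tuples :: "nat \<Rightarrow> nat \<Rightarrow> nat list set" where
  "tuples n r = {xs. length xs = r \<and> set xs \<subseteq> {1..n}}"

definition incr_tuples :: "nat \<Rightarrow> nat \<Rightarrow> nat list set" where
  "incr_tuples n r = {xs \<in> tuples n r. sorted_wrt (<) xs}"

definition sr :: "nat list \<Rightarrow> nat list" where
  "sr xs = sort xs"

definition sgn_tup :: "nat list \<Rightarrow> complex" where
  "sgn_tup xs = (if distinct xs then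
      of_int (sign (THE \<sigma>. \<sigma> permutes {..<length xs} \<and>
                   map (\<lambda>m. xs ! \<sigma> m) [0..<length xs] = sort xs))
    else 0)"

definition Amat :: "nat \<Rightarrow> nat list \<Rightarrow> nat list \<Rightarrow> complex" where
  "Amat k i a = sgn_tup i / of_real (sqrt (real (fact k))) * (if sr i = a then 1 else 0)"

definition AHAT :: "nat \<Rightarrow> nat \<Rightarrow> (nat list \<Rightarrow> nat list \<Rightarrow> complex) \<Rightarrow> nat list \<Rightarrow> nat list \<Rightarrow> complex" where
  "AHAT n k H i j = (\<Sum>a\<in>incr_tuples n k. \<Sum>b\<in>incr_tuples n k. Amat k i a * H a b * Amat k j b)"

definition pi1 :: "nat \<Rightarrow> nat \<Rightarrow> (nat list \<Rightarrow> nat list \<Rightarrow> complex) \<Rightarrow> nat \<Rightarrow> nat \<Rightarrow> complex" where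
  "pi1 n k M i j = (\<Sum>l\<in>tuples n (k - 1). M (i # l) (j # l))"

definition piH :: "nat \<Rightarrow> nat \<Rightarrow> (nat list \<Rightarrow> nat list \<Rightarrow> complex) \<Rightarrow> nat \<Rightarrow> nat \<Rightarrow> complex" where
  "piH n k H = pi1 n k (AHAT n k H)"

end

theory Submission
  imports Defs "HOL-Combinatorics.Multiset_Permutations"
begin

lemma sort_mset_eq: "mset xs = mset ys \<Longrightarrow> sort xs = sort (ys::nat list)"
  by (metis properties_for_sort mset_sort sorted_sort)

lemma sgn_tup_eq:
  assumes "distinct x" "p permutes {..<length x}" "permute_list p x = sort x"
  shows "sgn_tup x = of_int (sign p)"
proof -
  have "(THE \<sigma>. \<sigma> permutes {..<length x} \<and>
                   map (\<lambda>m. x ! \<sigma> m) [0..<length x] = sort x) = p"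
  proof (rule the_equality)
    show "p permutes {..<length x} \<and> map (\<lambda>m. x ! p m) [0..<length x] = sort x"
      using assms by (simp add: permute_list_def)
  next
    fix \<sigma> assume s: "\<sigma> permutes {..<length x} \<and> map (\<lambda>m. x ! \<sigma> m) [0..<length x] = sort x"
    then have eq: "map (\<lambda>m. x ! \<sigma> m) [0..<length x] = map (\<lambda>m. x ! p m) [0..<length x]"
      using assms by (simp add: permute_list_def)
    show "\<sigma> = p"
    proof
      fix m
      show "\<sigma> m = p m"
      proof (cases "m < length x")
        case True
        have "x ! \<sigma> m = x ! p m" using eq True
          by (metis (no_types, lifting) add_0 diff_zero length_map length_upt nth_map nth_upt)
        moreover have "\<sigma> m < length x" "p m < length x"
          using True s assms(2) permutes_in_image by fastforce+
        ultimately show ?thesis using assms(1) nth_eq_iff_index_eq by blast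
      next
        case False
        then have "\<sigma> m = m" "p m = m" using s assms(2)
          by (meson lessThan_iff permutes_not_in)+
        then show ?thesis by simp
      qed
    qed
  qed
  then show ?thesis using assms(1) unfolding sgn_tup_def by simp
qed

lemma sgn_tup_perm:
  assumes "distinct x" "q permutes {..<length x}"
  shows "sgn_tup (permute_list q x) = of_int (sign q) * sgn_tup x"
proof -
  obtain p where p: "p permutes {..<length x}" "permute_list p x = sort x"
    using mset_eq_permutation[of "sort x" x] by auto
  have sx: "sgn_tup x = of_int (sign p)" using sgn_tup_eq[OF assms(1) p] .
  let ?y = "permute_list q x"
  have r: "inv q \<circ> p permutes {..<length x}"
    using p(1) assms(2) by (simp add: permutes_compose permutes_inv)
  have "permute_list (inv q \<circ> p) ?y = permute_list (q \<circ> (inv q \<circ> p)) x"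
    using permute_list_compose[of "inv q \<circ> p" x q] r by simp
  also have "q \<circ> (inv q \<circ> p) = p"
    using assms(2) by (simp add: o_assoc permutes_inv_o(1))
  finally have 1: "permute_list (inv q \<circ> p) ?y = sort x"
    using p(2) by (simp add: comp_def)
  have "sort ?y = sort x"
    by (rule sort_mset_eq) (use assms(2) in simp)
  with 1 have "permute_list (inv q \<circ> p) ?y = sort ?y" by simp
  then have "sgn_tup ?y = of_int (sign (inv q \<circ> p))"
    using sgn_tup_eq[of ?y "inv q \<circ> p"] r assms by (simp add: distinct_permute_list)
  also have "sign (inv q \<circ> p) = sign q * sign p"
  proof -
    have pq: "permutation q" "permutation p"
      using assms(2) p(1) permutation_permutes by blast+
    then have "permutation (inv q)" by (simp add: permutation_inverse)
    then have "sign (inv q \<circ> p) = sign (inv q) * sign p"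
      using pq sign_compose by blast
    then show ?thesis using pq sign_inverse by simp
  qed
  finally show ?thesis using sx by simp
qed

definition shiftp :: "(nat \<Rightarrow> nat) \<Rightarrow> nat \<Rightarrow> nat" where
  "shiftp p m = (if m = 0 then 0 else Suc (p (m - 1)))"

lemma shiftp_permutes:
  assumes "p permutes {..<m}"
  shows "shiftp p permutes {..<Suc m}"
proof (rule bij_imp_permutes)
  show "bij_betw (shiftp p) {..<Suc m} {..<Suc m}"
  proof (rule bij_betw_imageI)
    show "inj_on (shiftp p) {..<Suc m}"
    proof (rule inj_onI)
      fix a b assume ab: "shiftp p a = shiftp p b"
      have ip: "inj p" using assms by (rule permutes_inj)
      show "a = b"
      proof (cases "a = 0 \<or> b = 0")
        case True then show ?thesis using ab by (auto simp: shiftp_def split: if_splits)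
      next
        case False
        then have "p (a - 1) = p (b - 1)" using ab by (simp add: shiftp_def)
        then have "a - 1 = b - 1" using ip injD by metis
        then show ?thesis using False by linarith
      qed
    qed
    have "shiftp p ` {..<Suc m} \<subseteq> {..<Suc m}"
    proof
      fix y assume "y \<in> shiftp p ` {..<Suc m}"
      then obtain x where x: "x < Suc m" "y = shiftp p x" by auto
      show "y \<in> {..<Suc m}"
      proof (cases "x = 0")
        case True then show ?thesis using x by (simp add: shiftp_def)
      next
        case False
        then have "x - 1 \<in> {..<m}" using x by auto
        then have "p (x - 1) \<in> {..<m}" by (simp only: permutes_in_image[OF assms])
        then show ?thesis using x False by (simp add: shiftp_def)
      qed
    qed
    moreover have "{..<Suc m} \<subseteq> shiftp p ` {..<Suc m}"
    proof
      fix y assume y: "y \<in> {..<Suc m}"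
      show "y \<in> shiftp p ` {..<Suc m}"
      proof (cases y)
        case 0 then show ?thesis by (force simp: shiftp_def)
      next
        case (Suc z)
        then have "z \<in> {..<m}" using y by simp
        then obtain w where "w \<in> {..<m}" "p w = z"
          using assms permutes_image by (metis imageE)
        then show ?thesis using Suc
          by (intro image_eqI[of _ _ "Suc w"]) (auto simp: shiftp_def)
      qed
    qed
    ultimately show "shiftp p ` {..<Suc m} = {..<Suc m}" by blast
  qed
next
  fix x assume "x \<notin> {..<Suc m}"
  then show "shiftp p x = x" using assms by (auto simp: shiftp_def permutes_not_in)
qed

lemma permute_list_shiftp:
  assumes "p permutes {..<length l}"
  shows "permute_list (shiftp p) (a # l) = a # permute_list p l"
  unfolding permute_list_def
  by (simp add: shiftp_def map_upt_Suc del: upt_Suc)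

lemma finite_tuples: "finite (tuples n r)"
proof -
  have "tuples n r = {xs. set xs \<subseteq> {1..n} \<and> length xs = r}"
    unfolding tuples_def by auto
  then show ?thesis using finite_lists_length_eq[of "{1..n}" r] by simp
qed

lemma finite_incr_tuples: "finite (incr_tuples n r)"
  unfolding incr_tuples_def using finite_tuples by simp

lemma sr_in_incr:
  assumes "x \<in> tuples n k" "distinct x"
  shows "sr x \<in> incr_tuples n k"
  using assms unfolding incr_tuples_def tuples_def sr_def
  by (simp add: strict_sorted_iff)

lemma AHAT_eq:
  assumes x: "x \<in> tuples n k" and y: "y \<in> tuples n k"
  shows "AHAT n k H x y = sgn_tup x * sgn_tup y / of_nat (fact k) * H (sr x) (sr y)"
proof (cases "distinct x \<and> distinct y")
  case False
  then have "sgn_tup x = 0 \<or> sgn_tup y = 0" unfolding sgn_tup_def by auto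
  then show ?thesis by (elim disjE) (simp_all add: AHAT_def Amat_def)
next
  case True
  define c :: complex where "c = of_real (sqrt (real (fact k)))"
  have cc: "c * c = of_nat (fact k)"
  proof -
    have "sqrt (real (fact k)) * sqrt (real (fact k)) = real (fact k)" by simp
    then have "(of_real (sqrt (real (fact k) ) * sqrt (real (fact k))) :: complex) = of_nat (fact k)"
      by simp
    then show ?thesis unfolding c_def by (simp only: of_real_mult)
  qed
  let ?I = "incr_tuples n k"
  have Ax: "\<And>a. Amat k x a = (if a = sr x then sgn_tup x / c else 0)"
    and Ay: "\<And>a. Amat k y a = (if a = sr y then sgn_tup y / c else 0)"
    unfolding Amat_def c_def by auto
  have inner: "\<And>a. (\<Sum>b\<in>?I. Amat k x a * H a b * Amat k y b) = Amat k x a * H a (sr y) * (sgn_tup y / c)"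
  proof -
    fix a
    have "(\<Sum>b\<in>?I. Amat k x a * H a b * Amat k y b) =
          (\<Sum>b\<in>?I. if b = sr y then Amat k x a * H a (sr y) * (sgn_tup y / c) else 0)"
      by (rule sum.cong) (auto simp: Ay)
    also have "\<dots> = Amat k x a * H a (sr y) * (sgn_tup y / c)"
      using sr_in_incr[OF y] True by (subst sum.delta[OF finite_incr_tuples]) simp
    finally show "(\<Sum>b\<in>?I. Amat k x a * H a b * Amat k y b) = Amat k x a * H a (sr y) * (sgn_tup y / c)" .
  qed
  have "AHAT n k H x y = (\<Sum>a\<in>?I. Amat k x a * H a (sr y) * (sgn_tup y / c))"
    unfolding AHAT_def using inner by simp
  also have "\<dots> = (\<Sum>a\<in>?I. if a = sr x then sgn_tup x / c * H (sr x) (sr y) * (sgn_tup y / c) else 0)"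
    by (rule sum.cong) (auto simp: Ax)
  also have "\<dots> = sgn_tup x / c * H (sr x) (sr y) * (sgn_tup y / c)"
    using sr_in_incr[OF x] True by (subst sum.delta[OF finite_incr_tuples]) simp
  also have "\<dots> = sgn_tup x * sgn_tup y / (c * c) * H (sr x) (sr y)"
    by (simp add: field_simps)
  finally show ?thesis using cc by simp
qed

lemma g_perm_invariant:
  fixes l l' :: "nat list"
  assumes "distinct l'" "i \<notin> set l'" "j \<notin> set l'" "set l = set l'" "distinct l"
  shows "sgn_tup (i # l) * sgn_tup (j # l) * H (sr (i # l)) (sr (j # l)) =
         sgn_tup (i # l') * sgn_tup (j # l') * H (sr (i # l')) (sr (j # l'))"
proof -
  have m: "mset l = mset l'" using assms set_eq_iff_mset_eq_distinct by blast
  obtain p where p: "p permutes {..<length l'}" "permute_list p l' = l"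
    using mset_eq_permutation[OF m] by blast
  have sp: "shiftp p permutes {..<length (i # l')}" using shiftp_permutes[OF p(1)] by simp
  have li: "i # l = permute_list (shiftp p) (i # l')" "j # l = permute_list (shiftp p) (j # l')"
    using permute_list_shiftp[OF p(1)] p(2) by auto
  have si: "sgn_tup (i # l) = of_int (sign (shiftp p)) * sgn_tup (i # l')"
    using sgn_tup_perm[of "i # l'" "shiftp p"] sp assms li(1) by simp
  have sj: "sgn_tup (j # l) = of_int (sign (shiftp p)) * sgn_tup (j # l')"
    using sgn_tup_perm[of "j # l'" "shiftp p"] sp assms li(2) by simp
  have "sr (i # l) = sr (i # l')" "sr (j # l) = sr (j # l')"
    unfolding sr_def by (rule sort_mset_eq, simp add: m)+
  moreover have "(of_int (sign (shiftp p)) :: complex) * of_int (sign (shiftp p)) = 1"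
    by (metis of_int_1 of_int_mult sign_idempotent)
  ultimately show ?thesis using si sj
    by (metis (no_types, lifting) ab_semigroup_mult_class.mult_ac(1) mult.left_commute mult_1)
qed

theorem lemma3p3:
  fixes n k :: nat and H :: "nat list \<Rightarrow> nat list \<Rightarrow> complex" and i j :: nat
  assumes "1 < k" and "k < n - 1"
    and herm: "\<forall>a\<in>incr_tuples n k. \<forall>b\<in>incr_tuples n k. H a b = cnj (H b a)"
    and "i \<in> {1..n}" and "j \<in> {1..n}"
  shows "piH n k H i j =
    (1 / of_nat k) * (\<Sum>l\<in>{l \<in> incr_tuples n (k - 1). i \<notin> set l \<and> j \<notin> set l}.
        sgn_tup (i # l) * sgn_tup (j # l) * H (sr (i # l)) (sr (j # l)))"
proof -
  define T where "T = tuples n (k - 1)"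
  define S where "S = {l \<in> incr_tuples n (k - 1). i \<notin> set l \<and> j \<notin> set l}"
  define D where "D = {l \<in> T. distinct l \<and> i \<notin> set l \<and> j \<notin> set l}"
  define f where "f l = sgn_tup (i # l) * sgn_tup (j # l) * H (sr (i # l)) (sr (j # l))" for l
  define g where "g l = f l / of_nat (fact k)" for l
  have fT: "finite T" unfolding T_def by (rule finite_tuples)
  have fS: "finite S" unfolding S_def using finite_incr_tuples[of n "k-1"] by simp
  have fD: "finite D" unfolding D_def using fT by simp
  have cons_in: "\<And>a l. a \<in> {1..n} \<Longrightarrow> l \<in> T \<Longrightarrow> a # l \<in> tuples n k"
    using assms(1) unfolding T_def tuples_def by auto
  have "piH n k H i j = (\<Sum>l\<in>T. AHAT n k H (i # l) (j # l))"
    unfolding piH_def pi1_def T_def by simp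
  also have "\<dots> = (\<Sum>l\<in>T. g l)"
  proof (rule sum.cong[OF refl])
    fix l assume l: "l \<in> T"
    show "AHAT n k H (i # l) (j # l) = g l"
      using AHAT_eq[OF cons_in[OF assms(4) l] cons_in[OF assms(5) l], of H]
      by (simp add: g_def f_def)
  qed
  also have "\<dots> = (\<Sum>l\<in>D. g l)"
  proof (rule sum.mono_neutral_right[OF fT])
    show "D \<subseteq> T" unfolding D_def by auto
    show "\<forall>l\<in>T - D. g l = 0"
      unfolding D_def g_def f_def sgn_tup_def by auto
  qed
  also have "\<dots> = (\<Sum>l'\<in>S. \<Sum>l\<in>{l. l \<in> D \<and> sort l = l'}. g l)"
  proof (rule sum.group[symmetric, OF fD fS])
    show "sort ` D \<subseteq> S"
      unfolding D_def S_def T_def incr_tuples_def tuples_def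
      by (auto simp: strict_sorted_iff)
  qed
  also have "\<dots> = (\<Sum>l'\<in>S. of_nat (fact (k - 1)) * g l')"
  proof (rule sum.cong[OF refl])
    fix l' assume l': "l' \<in> S"
    then have dl': "distinct l'" "sorted l'" "length l' = k - 1" "set l' \<subseteq> {1..n}"
      "i \<notin> set l'" "j \<notin> set l'"
      unfolding S_def incr_tuples_def tuples_def by (auto simp: strict_sorted_iff)
    have eqset: "{l. l \<in> D \<and> sort l = l'} = permutations_of_set (set l')"
    proof (intro set_eqI iffI)
      fix l assume "l \<in> {l. l \<in> D \<and> sort l = l'}"
      then show "l \<in> permutations_of_set (set l')"
        unfolding permutations_of_set_def D_def by auto
    next
      fix l assume "l \<in> permutations_of_set (set l')"
      then have "set l = set l'" "distinct l" unfolding permutations_of_set_def by auto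
      moreover then have "length l = k - 1"
        using dl' by (metis distinct_card)
      moreover have "sort l = l'"
        using \<open>set l = set l'\<close> \<open>distinct l\<close> dl'
        by (intro sorted_distinct_set_unique) auto
      ultimately show "l \<in> {l. l \<in> D \<and> sort l = l'}"
        using dl' unfolding D_def T_def tuples_def by auto
    qed
    have "(\<Sum>l\<in>{l. l \<in> D \<and> sort l = l'}. g l) = (\<Sum>l\<in>permutations_of_set (set l'). g l')"
      unfolding eqset
    proof (rule sum.cong[OF refl])
      fix l assume "l \<in> permutations_of_set (set l')"
      then have "set l = set l'" "distinct l" unfolding permutations_of_set_def by auto
      then show "g l = g l'" unfolding g_def f_def
        using g_perm_invariant[of l' i j l H] dl' by simp
    qed
    also have "\<dots> = of_nat (fact (k - 1)) * g l'"
      using dl' by (simp add: distinct_card)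
    finally show "(\<Sum>l\<in>{l. l \<in> D \<and> sort l = l'}. g l) = of_nat (fact (k - 1)) * g l'" .
  qed
  also have "\<dots> = (\<Sum>l'\<in>S. (1 / of_nat k) * f l')"
  proof (rule sum.cong[OF refl])
    fix l'
    have fk: "(of_nat (fact k) :: complex) = of_nat k * of_nat (fact (k - 1))"
    proof -
      have "fact k = k * fact (k - 1)"
        using fact_reduce[of k, where 'a=nat] assms(1) by simp
      then show ?thesis by (simp only: of_nat_mult)
    qed
    have "(of_nat (fact (k - 1)) :: complex) \<noteq> 0" by simp
    moreover have "(of_nat k :: complex) \<noteq> 0" using assms(1) by simp
    ultimately show "of_nat (fact (k - 1)) * g l' = (1 / of_nat k) * f l'"
      unfolding g_def fk by (simp add: field_simps)
  qed
  also have "\<dots> = (1 / of_nat k) * (\<Sum>l'\<in>S. f l')"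
    by (simp add: sum_distrib_left)
  finally show ?thesis unfolding S_def f_def .
qed

end
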